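(* Let $m_1\ge 1$ and let $(\alpha_i)_{i\in\mathbb{Z}}$ be positive reals with $\alpha_{i+m_1}=\alpha_i$ for all $i$. Let $N$ be a positive multiple of $m_1$ and index positions in a row by $i\in\mathbb{Z}/N\mathbb{Z}$. Let $\beta,\beta'>0$ and suppose that either (small $r$ case) $\alpha_i\beta<1$ and $\alpha_i\beta'<1$ for all $i$, or (large $r$ case) $\alpha_i\beta>1$ and $\alpha_i\beta'>1$ for all $i$; put $\epsilon=+1$ in the small $r$ case and $\epsilon=-1$ in the large $r$ case. For $b\in\{\beta,\beta'\}$ define the $2^N\times 2^N$ matrix $T_b$, indexed by $x,z\in\{0,1\}^{\mathbb{Z}/N\mathbb{Z}}$, by $$T_b(x,z)=\sum_{e}\prod_{i\in\mathbb{Z}/N\mathbb{Z}}\mathrm{wt}_i(x,z,e),$$ where the sum is over all $e\in\{0,1\}^{\mathbb{Z}/N\mathbb{Z}}$ satisfying $x_i+e_i=z_i+e_{i-1}\le 1$ for every $i$, and where $\mathrm{wt}_i=\epsilon(1-\alpha_i^2b^2)$ if $x_i=e_i=z_i=e_{i-1}=0$; $\mathrm{wt}_i=\alpha_i b$ if $x_i=e_{i-1}=1$ or if $e_i=z_i=1$; and $\mathrm{wt}_i=1$ otherwise (i.e. if $x_i=z_i=1$ or $e_i=e_{i-1}=1$). Then $T_\beta T_{\beta'}=T_{\beta'}T_\beta$.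
   Context: This is the (vertical) transfer matrix of one row of the five-vertex model on a cylinder of circumference $N$: $x_i$ (resp. $z_i$) indicates whether the vertical edge below (resp. above) vertex $i$ is occupied, and $e_i$ indicates whether the horizontal edge between vertex $i$ and vertex $i+1$ is occupied. Paths move north or west and are vertex-disjoint. The five allowed local configurations at a vertex are: empty, vertical straight-through, horizontal straight-through, and two corners (entering from the south and leaving to the west, or entering from the east and leaving to the north). The vertex parameter at position $i$ in a row with parameter $b$ is $r=\alpha_i b$; empty vertices have weight $|1-r^2|$, corners have weight $r$, and straight-through vertices have weight $1$. *)

theory Defs
  imports Complex_Main
begin

text \<open>Positions of a row are 0..N-1, standing for Z/NZ. A 0/1 configuration on the
row is represented by the set of occupied positions (a subset of {0..<N}).\<close>

definition ofb :: "bool \<Rightarrow> nat" where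
  "ofb p = (if p then 1 else 0)"

definition prevpos :: "nat \<Rightarrow> nat \<Rightarrow> nat" where
  "prevpos N i = (i + N - 1) mod N"

definition admissible :: "nat \<Rightarrow> nat set \<Rightarrow> nat set \<Rightarrow> nat set \<Rightarrow> bool" where
  "admissible N x z e \<longleftrightarrow>
     (\<forall>i<N. ofb (i \<in> x) + ofb (i \<in> e) = ofb (i \<in> z) + ofb (prevpos N i \<in> e)
           \<and> ofb (i \<in> x) + ofb (i \<in> e) \<le> 1)"

definition wt :: "real \<Rightarrow> real \<Rightarrow> nat \<Rightarrow> nat set \<Rightarrow> nat set \<Rightarrow> nat set \<Rightarrow> nat \<Rightarrow> real" where
  "wt eps r N x z e i =
     (if i \<notin> x \<and> i \<notin> e \<and> i \<notin> z \<and> prevpos N i \<notin> e then eps * (1 - r\<^sup>2)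
      else if (i \<in> x \<and> prevpos N i \<in> e) \<or> (i \<in> e \<and> i \<in> z) then r
      else 1)"

definition Tmat :: "(int \<Rightarrow> real) \<Rightarrow> real \<Rightarrow> nat \<Rightarrow> real \<Rightarrow> nat set \<Rightarrow> nat set \<Rightarrow> real" where
  "Tmat alpha eps N b x z =
     (\<Sum>e\<in>{e. e \<subseteq> {0..<N} \<and> admissible N x z e}.
        \<Prod>i<N. wt eps (alpha (int i) * b) N x z e i)"

definition matmul :: "nat \<Rightarrow> (nat set \<Rightarrow> nat set \<Rightarrow> real) \<Rightarrow> (nat set \<Rightarrow> nat set \<Rightarrow> real)
     \<Rightarrow> nat set \<Rightarrow> nat set \<Rightarrow> real" where
  "matmul N A B x z = (\<Sum>y\<in>Pow {0..<N}. A x y * B y z)"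

end

theory Submission
  imports Defs
begin

type_synonym st = "bool \<times> bool"
type_synonym mat4 = "st \<Rightarrow> st \<Rightarrow> real"

definition mmul :: "mat4 \<Rightarrow> mat4 \<Rightarrow> mat4" where
  "mmul A B a b = (\<Sum>c\<in>UNIV. A a c * B c b)"
definition mid :: mat4 where "mid a b = (if a = b then 1 else 0)"
fun prodm :: "(nat \<Rightarrow> mat4) \<Rightarrow> nat \<Rightarrow> mat4" where
  "prodm G 0 = mid" | "prodm G (Suc n) = mmul (G n) (prodm G n)"
definition mtr :: "mat4 \<Rightarrow> real" where "mtr A = (\<Sum>a\<in>UNIV. A a a)"

lemma sum_st: "(\<Sum>c\<in>(UNIV::st set). g c) = g (False,False) + g (False,True) + g (True,False) + g (True,True)"
proof -
  have "(UNIV::st set) = {(False,False),(False,True),(True,False),(True,True)}"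
    by (auto simp: UNIV_bool)
  show ?thesis by (subst \<open>UNIV = _\<close>) (simp add: add.assoc)
qed

lemma swap3: "(\<Sum>e\<in>A. \<Sum>f\<in>B. \<Sum>c\<in>C. h e f c) = (\<Sum>c\<in>C. \<Sum>e\<in>A. \<Sum>f\<in>B. h e f c)"
proof -
  have "(\<Sum>e\<in>A. \<Sum>f\<in>B. \<Sum>c\<in>C. h e f c) = (\<Sum>e\<in>A. \<Sum>c\<in>C. \<Sum>f\<in>B. h e f c)"
    by (rule sum.cong[OF refl], rule sum.swap)
  also have "\<dots> = (\<Sum>c\<in>C. \<Sum>e\<in>A. \<Sum>f\<in>B. h e f c)" by (rule sum.swap)
  finally show ?thesis .
qed

lemma mmul_assoc: "mmul (mmul A B) C = mmul A (mmul B C)"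
proof (rule ext, rule ext)
  fix a b
  have "mmul (mmul A B) C a b = (\<Sum>c\<in>UNIV. \<Sum>d\<in>UNIV. A a d * B d c * C c b)"
    by (simp add: mmul_def sum_distrib_right)
  also have "\<dots> = (\<Sum>d\<in>UNIV. \<Sum>c\<in>UNIV. A a d * B d c * C c b)" by (rule sum.swap)
  also have "\<dots> = mmul A (mmul B C) a b"
    by (simp add: mmul_def sum_distrib_left mult.assoc)
  finally show "mmul (mmul A B) C a b = mmul A (mmul B C) a b" .
qed

lemma ifmul1: "(if P then 1 else 0) * (a::real) = (if P then a else 0)" by simp
lemma ifmul2: "(a::real) * (if P then 1 else 0) = (if P then a else 0)" by simp
lemma ifmul3: "(a::real) * (if P then b else 0) = (if P then a * b else 0)" by simp
lemma mmul_mid_left: "mmul mid A = A"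
  by (rule ext, rule ext) (simp add: mmul_def mid_def ifmul1 sum.delta)
lemma mmul_mid_right: "mmul A mid = A"
  by (rule ext, rule ext) (simp add: mmul_def mid_def ifmul2 sum.delta')

lemma mtr_comm: "mtr (mmul A B) = mtr (mmul B A)"
  unfolding mtr_def mmul_def by (subst sum.swap) (simp add: mult.commute)

lemma intertwine:
  assumes "\<And>i. mmul R (G i) = mmul (H i) R"
  shows "mmul R (prodm G n) = mmul (prodm H n) R"
proof (induction n)
  case 0 then show ?case by (simp add: mmul_mid_left mmul_mid_right)
next
  case (Suc n)
  have "mmul R (prodm G (Suc n)) = mmul (mmul R (G n)) (prodm G n)"
    by (simp add: mmul_assoc)
  also have "\<dots> = mmul (H n) (mmul R (prodm G n))" by (simp add: assms mmul_assoc)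
  also have "\<dots> = mmul (prodm H (Suc n)) R" by (simp add: Suc mmul_assoc)
  finally show ?case .
qed

lemma trace_eq:
  assumes "\<And>i. mmul R (G i) = mmul (H i) R" and "mmul R S = mid" and "mmul S R = mid"
  shows "mtr (prodm G n) = mtr (prodm H n)"
proof -
  have "mtr (prodm H n) = mtr (mmul (prodm H n) (mmul R S))" by (simp add: assms mmul_mid_right)
  also have "\<dots> = mtr (mmul (mmul R (prodm G n)) S)"
    by (simp add: intertwine[OF assms(1)] mmul_assoc)
  also have "\<dots> = mtr (mmul S (mmul R (prodm G n)))" by (rule mtr_comm)
  also have "\<dots> = mtr (prodm G n)" by (simp add: mmul_assoc[symmetric] assms mmul_mid_left)
  finally show ?thesis by simp
qed


definition lw :: "real \<Rightarrow> real \<Rightarrow> bool \<Rightarrow> bool \<Rightarrow> bool \<Rightarrow> bool \<Rightarrow> real" where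
  "lw eps r X Z E P = (if ofb X + ofb E = ofb Z + ofb P \<and> ofb X + ofb E \<le> 1 then
     (if \<not>X \<and> \<not>E \<and> \<not>Z \<and> \<not>P then eps * (1 - r\<^sup>2) else if (X \<and> P) \<or> (E \<and> Z) then r else 1) else 0)"

lemma prod_if_all:
  assumes "finite A"
  shows "(\<Prod>i\<in>A. if P i then f i else (0::real)) = (if \<forall>i\<in>A. P i then \<Prod>i\<in>A. f i else 0)"
proof (cases "\<forall>i\<in>A. P i")
  case True then show ?thesis by (simp cong: prod.cong)
next
  case False
  then obtain i where "i \<in> A" "\<not> P i" by blast
  then show ?thesis using assms False by (auto intro!: prod_zero)
qed

lemma Tmat_alt:
  "Tmat alpha eps N b x z =
   (\<Sum>e\<in>Pow {0..<N}. \<Prod>i<N. lw eps (alpha (int i) * b) (i\<in>x) (i\<in>z) (i\<in>e) (prevpos N i \<in> e))"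
proof -
  have 1: "{e. e \<subseteq> {0..<N} \<and> admissible N x z e} = {e \<in> Pow {0..<N}. admissible N x z e}" by auto
  have 2: "(\<Prod>i<N. lw eps (alpha (int i) * b) (i\<in>x) (i\<in>z) (i\<in>e) (prevpos N i \<in> e))
     = (if admissible N x z e then \<Prod>i<N. wt eps (alpha (int i) * b) N x z e i else 0)" for e
  proof -
    have "(\<Prod>i<N. lw eps (alpha (int i) * b) (i\<in>x) (i\<in>z) (i\<in>e) (prevpos N i \<in> e))
      = (\<Prod>i<N. if ofb (i \<in> x) + ofb (i \<in> e) = ofb (i \<in> z) + ofb (prevpos N i \<in> e)
           \<and> ofb (i \<in> x) + ofb (i \<in> e) \<le> 1 then wt eps (alpha (int i) * b) N x z e i else 0)"
      by (rule prod.cong) (simp_all add: lw_def wt_def)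
    also have "\<dots> = (if admissible N x z e then \<Prod>i<N. wt eps (alpha (int i) * b) N x z e i else 0)"
    proof -
      have ae: "(\<forall>i\<in>{..<N}. ofb (i \<in> x) + ofb (i \<in> e) = ofb (i \<in> z) + ofb (prevpos N i \<in> e)
           \<and> ofb (i \<in> x) + ofb (i \<in> e) \<le> 1) = admissible N x z e" by (auto simp: admissible_def)
      show ?thesis by (subst prod_if_all) (simp_all only: finite_lessThan ae)
    qed
    finally show ?thesis .
  qed
  show ?thesis unfolding Tmat_def 2 by (subst 1) (rule sum.inter_filter; simp)
qed

lemma Pow_Suc_sum:
  "(\<Sum>y\<in>Pow {0..<Suc n}. g y) = (\<Sum>y\<in>Pow {0..<n}. g y) + (\<Sum>y\<in>Pow {0..<n}. g (insert n y))"
proof -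
  have e: "Pow {0..<Suc n} = Pow {0..<n} \<union> insert n ` Pow {0..<n}"
    by (simp add: atLeast0_lessThan_Suc Pow_insert)
  have d: "Pow {0..<n} \<inter> insert n ` Pow {0..<n} = {}" by auto
  have i: "inj_on (insert n) (Pow {0..<n})"
    by (rule inj_onI) (metis Pow_iff atLeastLessThan_iff insert_ident less_irrefl subsetD)
  show ?thesis unfolding e by (simp add: sum.union_disjoint d sum.reindex i)
qed

lemma sum_prod_fact:
  fixes n :: nat and h :: "nat \<Rightarrow> bool \<Rightarrow> real"
  shows "(\<Sum>y\<in>Pow {0..<n}. \<Prod>i<n. h i (i \<in> y)) = (\<Prod>i<n. h i True + h i False)"
proof (induction n)
  case 0 then show ?case by simp
next
  case (Suc n)
  have a: "(\<Prod>i<n. h i (i \<in> insert n y)) = (\<Prod>i<n. h i (i \<in> y))" for y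
    by (rule prod.cong) auto
  have b: "y \<subseteq> {0..<n} \<Longrightarrow> n \<notin> y" for y by auto
  have "(\<Sum>y\<in>Pow {0..<Suc n}. \<Prod>i<Suc n. h i (i \<in> y))
     = (\<Sum>y\<in>Pow {0..<n}. h n False * (\<Prod>i<n. h i (i \<in> y))) + (\<Sum>y\<in>Pow {0..<n}. h n True * (\<Prod>i<n. h i (i \<in> y)))"
  proof -
    have c: "(\<Sum>y\<in>Pow {0..<n}. h n (n \<in> y) * (\<Prod>i<n. h i (i \<in> y)))
       = (\<Sum>y\<in>Pow {0..<n}. h n False * (\<Prod>i<n. h i (i \<in> y)))" by (rule sum.cong) (auto simp: b)
    show ?thesis unfolding Pow_Suc_sum by (simp add: a c mult.commute)
  qed
  also have "\<dots> = (\<Prod>i<Suc n. h i True + h i False)"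
    by (simp add: sum_distrib_left[symmetric] Suc algebra_simps)
  finally show ?case by simp
qed


definition stf :: "nat set \<Rightarrow> nat set \<Rightarrow> nat \<Rightarrow> st" where
  "stf e f i = (i \<in> e, i \<in> f)"
definition pv :: "st \<Rightarrow> nat set \<Rightarrow> nat set \<Rightarrow> nat \<Rightarrow> st" where
  "pv b e f i = (if i = 0 then b else stf e f (i - 1))"
definition Pi_ch :: "(nat \<Rightarrow> mat4) \<Rightarrow> st \<Rightarrow> nat \<Rightarrow> nat set \<Rightarrow> nat set \<Rightarrow> real" where
  "Pi_ch G b n e f = (\<Prod>i<n. G i (stf e f i) (pv b e f i))"
definition Tch :: "(nat \<Rightarrow> mat4) \<Rightarrow> st \<Rightarrow> st \<Rightarrow> nat \<Rightarrow> nat set \<Rightarrow> nat set \<Rightarrow> real" where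
  "Tch G a b n e f = (if pv b e f n = a then Pi_ch G b n e f else 0)"

lemma T_red:
  assumes "e \<subseteq> {0..<n}" "f \<subseteq> {0..<n}"
  shows "Tch G a b (Suc n) (if p then insert n e else e) (if q then insert n f else f)
       = (if (p,q) = a then G n (p,q) (pv b e f n) * Pi_ch G b n e f else 0)"
proof -
  let ?E = "if p then insert n e else e" and ?F = "if q then insert n f else f"
  have ne: "n \<notin> e" "n \<notin> f" using assms by auto
  have s: "i < n \<Longrightarrow> stf ?E ?F i = stf e f i" for i by (auto simp: stf_def)
  have p: "i \<le> n \<Longrightarrow> pv b ?E ?F i = pv b e f i" for i by (auto simp: pv_def stf_def)
  have sn: "stf ?E ?F n = (p,q)" using ne by (auto simp: stf_def)
  have pn: "pv b ?E ?F (Suc n) = (p,q)" using sn by (simp add: pv_def)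
  have pi: "Pi_ch G b n ?E ?F = Pi_ch G b n e f" unfolding Pi_ch_def
    by (rule prod.cong) (auto simp: s p)
  have "Pi_ch G b (Suc n) ?E ?F = G n (p,q) (pv b e f n) * Pi_ch G b n e f"
    using pi sn p[of n] by (simp add: Pi_ch_def)
  then show ?thesis unfolding Tch_def pn by simp
qed

lemma chain:
  "(\<Sum>e\<in>Pow {0..<n}. \<Sum>f\<in>Pow {0..<n}. Tch G a b n e f) = prodm G n a b"
proof (induction n arbitrary: a)
  case 0 then show ?case by (simp add: Tch_def pv_def Pi_ch_def mid_def)
next
  case (Suc n)
  define Q where "Q d = (\<Sum>e\<in>Pow {0..<n}. \<Sum>f\<in>Pow {0..<n}. G n d (pv b e f n) * Pi_ch G b n e f)" for d
  have Q: "Q d = (\<Sum>c\<in>UNIV. G n d c * prodm G n c b)" for d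
  proof -
    have "Q d = (\<Sum>e\<in>Pow {0..<n}. \<Sum>f\<in>Pow {0..<n}. \<Sum>c\<in>UNIV. G n d c * Tch G c b n e f)"
      unfolding Q_def Tch_def
      by (intro sum.cong refl) (simp add: ifmul3 sum.delta)
    also have "\<dots> = (\<Sum>c\<in>UNIV. \<Sum>e\<in>Pow {0..<n}. \<Sum>f\<in>Pow {0..<n}. G n d c * Tch G c b n e f)"
      by (rule swap3)
    also have "\<dots> = (\<Sum>c\<in>UNIV. G n d c * prodm G n c b)"
      by (simp only: Suc[symmetric] sum_distrib_left)
    finally show ?thesis .
  qed
  have T00: "e \<subseteq> {0..<n} \<Longrightarrow> f \<subseteq> {0..<n} \<Longrightarrow> Tch G a b (Suc n) e f = (if (False,False) = a then G n (False,False) (pv b e f n) * Pi_ch G b n e f else 0)" for e f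
    using T_red[of e n f G a b False False] by simp
  have T01: "e \<subseteq> {0..<n} \<Longrightarrow> f \<subseteq> {0..<n} \<Longrightarrow> Tch G a b (Suc n) e (insert n f) = (if (False,True) = a then G n (False,True) (pv b e f n) * Pi_ch G b n e f else 0)" for e f
    using T_red[of e n f G a b False True] by simp
  have T10: "e \<subseteq> {0..<n} \<Longrightarrow> f \<subseteq> {0..<n} \<Longrightarrow> Tch G a b (Suc n) (insert n e) f = (if (True,False) = a then G n (True,False) (pv b e f n) * Pi_ch G b n e f else 0)" for e f
    using T_red[of e n f G a b True False] by simp
  have T11: "e \<subseteq> {0..<n} \<Longrightarrow> f \<subseteq> {0..<n} \<Longrightarrow> Tch G a b (Suc n) (insert n e) (insert n f) = (if (True,True) = a then G n (True,True) (pv b e f n) * Pi_ch G b n e f else 0)" for e f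
    using T_red[of e n f G a b True True] by simp
  have "(\<Sum>e\<in>Pow {0..<Suc n}. \<Sum>f\<in>Pow {0..<Suc n}. Tch G a b (Suc n) e f)
     = (\<Sum>e\<in>Pow {0..<n}. \<Sum>f\<in>Pow {0..<n}. 
          (if (False,False) = a then G n (False,False) (pv b e f n) * Pi_ch G b n e f else 0)
        + (if (False,True) = a then G n (False,True) (pv b e f n) * Pi_ch G b n e f else 0)
        + (if (True,False) = a then G n (True,False) (pv b e f n) * Pi_ch G b n e f else 0)
        + (if (True,True) = a then G n (True,True) (pv b e f n) * Pi_ch G b n e f else 0))"
    unfolding Pow_Suc_sum sum.distrib[symmetric]
    by (intro sum.cong refl) (simp add: T00 T01 T10 T11 add.assoc)
  also have "\<dots> = Q a"
    unfolding Q_def by (cases a) (auto intro!: sum.cong)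
  also have "\<dots> = prodm G (Suc n) a b" by (simp add: Q mmul_def)
  finally show ?case .
qed


lemma prevpos_alt: "N > 0 \<Longrightarrow> i < N \<Longrightarrow> prevpos N i = (if i = 0 then N - 1 else i - 1)"
proof -
  assume "N > 0" "i < N"
  show ?thesis
  proof (cases "i = 0")
    case True then show ?thesis using \<open>N > 0\<close> by (simp add: prevpos_def)
  next
    case False
    then have "i + N - 1 = (i - 1) + N" by simp
    then have "(i + N - 1) mod N = (i - 1) mod N" by simp
    also have "\<dots> = i - 1" using \<open>i < N\<close> by simp
    finally show ?thesis using False by (simp add: prevpos_def)
  qed
qed

lemma cyclic:
  assumes "N > 0"
  shows "(\<Sum>e\<in>Pow {0..<N}. \<Sum>f\<in>Pow {0..<N}. \<Prod>i<N. G i (stf e f i) (stf e f (prevpos N i)))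
       = mtr (prodm G N)"
proof -
  have 1: "(\<Prod>i<N. G i (stf e f i) (stf e f (prevpos N i))) = (\<Sum>a\<in>UNIV. Tch G a a N e f)" for e f
  proof -
    have pvN: "pv a e f N = stf e f (N - 1)" for a using assms by (simp add: pv_def)
    have "(\<Sum>a\<in>UNIV. Tch G a a N e f) = Pi_ch G (stf e f (N - 1)) N e f"
      unfolding Tch_def pvN by (simp add: sum.delta)
    also have "\<dots> = (\<Prod>i<N. G i (stf e f i) (stf e f (prevpos N i)))"
      unfolding Pi_ch_def
      by (rule prod.cong) (auto simp: pv_def prevpos_alt[OF assms])
    finally show ?thesis by simp
  qed
  have "(\<Sum>e\<in>Pow {0..<N}. \<Sum>f\<in>Pow {0..<N}. \<Prod>i<N. G i (stf e f i) (stf e f (prevpos N i)))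
     = (\<Sum>a\<in>UNIV. \<Sum>e\<in>Pow {0..<N}. \<Sum>f\<in>Pow {0..<N}. Tch G a a N e f)"
    unfolding 1 by (rule swap3)
  also have "\<dots> = mtr (prodm G N)" by (simp add: chain mtr_def)
  finally show ?thesis .
qed

definition Kmat :: "real \<Rightarrow> real \<Rightarrow> real \<Rightarrow> bool \<Rightarrow> bool \<Rightarrow> mat4" where
  "Kmat eps r s X Z c d = (\<Sum>y\<in>UNIV. lw eps r X y (fst c) (fst d) * lw eps s y Z (snd c) (snd d))"

lemma matmul_alt:
  "matmul N (Tmat alpha eps N b1) (Tmat alpha eps N b2) x z =
   (\<Sum>e\<in>Pow {0..<N}. \<Sum>f\<in>Pow {0..<N}. \<Prod>i<N.
      Kmat eps (alpha (int i) * b1) (alpha (int i) * b2) (i \<in> x) (i \<in> z) (stf e f i) (stf e f (prevpos N i)))"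
proof -
  let ?A = "\<lambda>i y e. lw eps (alpha (int i) * b1) (i\<in>x) y (i\<in>e) (prevpos N i \<in> e)"
  let ?B = "\<lambda>i y f. lw eps (alpha (int i) * b2) y (i\<in>z) (i\<in>f) (prevpos N i \<in> f)"
  have "matmul N (Tmat alpha eps N b1) (Tmat alpha eps N b2) x z =
     (\<Sum>y\<in>Pow {0..<N}. \<Sum>e\<in>Pow {0..<N}. \<Sum>f\<in>Pow {0..<N}. (\<Prod>i<N. ?A i (i\<in>y) e) * (\<Prod>i<N. ?B i (i\<in>y) f))"
    unfolding matmul_def Tmat_alt by (simp add: sum_product)
  also have "\<dots> = (\<Sum>y\<in>Pow {0..<N}. \<Sum>e\<in>Pow {0..<N}. \<Sum>f\<in>Pow {0..<N}. \<Prod>i<N. ?A i (i\<in>y) e * ?B i (i\<in>y) f)"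
    by (simp only: prod.distrib)
  also have "\<dots> = (\<Sum>e\<in>Pow {0..<N}. \<Sum>f\<in>Pow {0..<N}. \<Sum>y\<in>Pow {0..<N}. \<Prod>i<N. ?A i (i\<in>y) e * ?B i (i\<in>y) f)"
    by (rule swap3[symmetric])
  also have "\<dots> = (\<Sum>e\<in>Pow {0..<N}. \<Sum>f\<in>Pow {0..<N}. \<Prod>i<N. ?A i True e * ?B i True f + ?A i False e * ?B i False f)"
    by (subst sum_prod_fact) simp
  also have "\<dots> = (\<Sum>e\<in>Pow {0..<N}. \<Sum>f\<in>Pow {0..<N}. \<Prod>i<N.
      Kmat eps (alpha (int i) * b1) (alpha (int i) * b2) (i \<in> x) (i \<in> z) (stf e f i) (stf e f (prevpos N i)))"
    by (intro sum.cong prod.cong refl) (simp add: Kmat_def stf_def UNIV_bool add.commute)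
  finally show ?thesis .
qed


definition Rm :: "real \<Rightarrow> real \<Rightarrow> mat4" where
  "Rm q c a b = (if a = b then (if fst a = snd a then q else 1)
     else if a = (False,True) \<and> b = (True,False) then c else 0)"

lemma Rm_inv:
  assumes "q \<noteq> 0"
  shows "mmul (Rm q c) (Rm (1/q) (-c)) = mid" "mmul (Rm (1/q) (-c)) (Rm q c) = mid"
  using assms by (auto intro!: ext simp: mmul_def Rm_def mid_def sum_st)

lemma Rm_intertwine:
  assumes "bb \<noteq> 0" "bb' \<noteq> 0"
  shows "mmul (Rm (bb/bb') (eps * (bb/bb' - bb'/bb))) (Kmat eps (al * bb) (al * bb') X Z)
       = mmul (Kmat eps (al * bb') (al * bb) X Z) (Rm (bb/bb') (eps * (bb/bb' - bb'/bb)))"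
proof (intro ext)
  fix a b :: st
  obtain a1 a2 b1 b2 where ab: "a = (a1,a2)" "b = (b1,b2)" by fastforce
  show "mmul (Rm (bb/bb') (eps * (bb/bb' - bb'/bb))) (Kmat eps (al * bb) (al * bb') X Z) a b
       = mmul (Kmat eps (al * bb') (al * bb) X Z) (Rm (bb/bb') (eps * (bb/bb' - bb'/bb))) a b"
    unfolding ab using assms
    apply (cases a1; cases a2; cases b1; cases b2; cases X; cases Z)
    apply (simp_all add: mmul_def sum_st Kmat_def Rm_def lw_def ofb_def UNIV_bool)
    apply (simp_all add: field_simps power2_eq_square)
    done
qed

theorem lemma3p1:
  fixes m1 N :: nat and alpha :: "int \<Rightarrow> real" and beta beta' eps :: real
  assumes "m1 \<ge> 1"
    and "\<And>i. alpha i > 0"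
    and "\<And>i. alpha (i + int m1) = alpha i"
    and "N > 0" and "m1 dvd N"
    and "beta > 0" and "beta' > 0"
    and "(eps = 1 \<and> (\<forall>i. alpha i * beta < 1 \<and> alpha i * beta' < 1))
       \<or> (eps = -1 \<and> (\<forall>i. alpha i * beta > 1 \<and> alpha i * beta' > 1))"
    and "x \<subseteq> {0..<N}" and "z \<subseteq> {0..<N}"
  shows "matmul N (Tmat alpha eps N beta) (Tmat alpha eps N beta') x z
       = matmul N (Tmat alpha eps N beta') (Tmat alpha eps N beta) x z"
proof -
  define G where "G i = Kmat eps (alpha (int i) * beta) (alpha (int i) * beta') (i \<in> x) (i \<in> z)" for i
  define H where "H i = Kmat eps (alpha (int i) * beta') (alpha (int i) * beta) (i \<in> x) (i \<in> z)" for i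
  define q where "q = beta / beta'"
  define c where "c = eps * (beta / beta' - beta' / beta)"
  have q0: "q \<noteq> 0" using assms(6,7) by (simp add: q_def)
  have I: "mmul (Rm q c) (G i) = mmul (H i) (Rm q c)" for i
    unfolding G_def H_def q_def c_def
    by (rule Rm_intertwine) (use assms(6,7) in auto)
  have "matmul N (Tmat alpha eps N beta) (Tmat alpha eps N beta') x z = mtr (prodm G N)"
    unfolding matmul_alt G_def by (rule cyclic[OF assms(4)])
  also have "\<dots> = mtr (prodm H N)"
    by (rule trace_eq[OF I Rm_inv(1)[OF q0] Rm_inv(2)[OF q0]])
  also have "\<dots> = matmul N (Tmat alpha eps N beta') (Tmat alpha eps N beta) x z"
    unfolding matmul_alt H_def by (rule cyclic[OF assms(4), symmetric])
  finally show ?thesis .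
qed

end
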